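(* Fix $L>0$. Let $\mathcal{P}_+=\bigsqcup_{N\ge1}\mathcal{P}_{+,N}$, where $\mathcal{P}_{+,N}$ is the set of $x=(x_1,\dots,x_{2N})\in(\mathbb{R}_{>0})^{2N}$ with $\sum_{i=1}^{2N}x_i\le L$ satisfying the highest weight condition. Let $\mathcal{R}$ be the set of all data $\big(s;(\mu^{(i)},\nu^{(i)})_{1\le i\le s};(J^{(i)})_{1\le i\le s}\big)$ where $s\ge1$ is an integer, $\mu^{(i)}>0$ are reals, $\nu^{(i)}\ge1$ are integers such that, with $N^{(i)}=\sum_{j=i}^{s}\nu^{(j)}$, one has $\sum_{i=1}^s N^{(i)}\mu^{(i)}\le L/2$, and each $J^{(i)}=(J^{(i)}_1,\dots,J^{(i)}_{\nu^{(i)}})$ is a real tuple with $0\le J^{(i)}_1\le\cdots\le J^{(i)}_{\nu^{(i)}}\le q_i$, where $\lambda^{(i)}=\sum_{l=1}^i\mu^{(l)}$ and $q_i=L-2\sum_{k=1}^{s}\min(\lambda^{(i)},\lambda^{(k)})\nu^{(k)}$. Define $\phi:\mathcal{P}_+\to\mathcal{R}$ by running Algorithm II on $x$ and setting $s=u$, taking the pairs $(\mu^{(i)},\nu^{(i)})$ it produces, and taking $J^{(i)}$ to be the tuple $$\underbrace{r^{(i)}_1,\dots,r^{(i)}_1}_{\lceil n^{(i)}_1/2\rceil},\ \underbrace{r^{(i)}_2,\dots,r^{(i)}_2}_{\lceil n^{(i)}_2/2\rceil},\ \dots,\ \underbrace{r^{(i)}_{k^{(i)}},\dots,r^{(i)}_{k^{(i)}}}_{\lceil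 n^{(i)}_{k^{(i)}}/2\rceil}.$$ Then $\phi$ is well defined (takes values in $\mathcal{R}$) and is a bijection $\mathcal{P}_+\to\mathcal{R}$.
   Context: Highest weight condition: a sequence $x_1,\dots,x_{2n}$ of nonnegative reals satisfies it if $\sum_{i=1}^k(x_{2i-1}-x_{2i})\ge0$ for all $1\le k\le n$. Algorithm II. Set $N^{(1)}=N$, $x^{(1)}=x$. Given $x^{(i)}=(x^{(i)}_1,\dots,x^{(i)}_{2N^{(i)}})$ of positive reals satisfying the highest weight condition: let $\mu^{(i)}=\min_j x^{(i)}_j$ and $y^{(i)}_j=x^{(i)}_j-\mu^{(i)}$. In the (linear, non-cyclic) array $y^{(i)}_1,\dots,y^{(i)}_{2N^{(i)}}$ consider the maximal runs of consecutive zeros (a lone zero counts as a run); say there are $k^{(i)}$ runs, numbered $1,\dots,k^{(i)}$ from left to right, with lengths $n^{(i)}_1,\dots,n^{(i)}_{k^{(i)}}$. Let $I^{(i)}_j$ be the position of the first entry of the $j$th run and $r^{(i)}_j=\sum_{l=1}^{I^{(i)}_j-1}y^{(i)}_l$. Let $N^{(i+1)}=N^{(i)}-\sum_{j}\lceil n^{(i)}_j/2\rceil$ and $\nu^{(i)}=N^{(i)}-N^{(i+1)}$. If $N^{(i+1)}=0$, stop and set $u=i$. Otherwise form $x^{(i+1)}$ from $y^{(i)}$: (a) if a run of zeros is at the left end, delete it; (b) for every run of zeros lying between positive entries $a,b$, delete the zeros if the run length is even, and if odd delete the zeros and also replace $a,b$ by the single entry $a+b$; (c') if a run of zeros is at the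 right end, preceded by a positive entry $a$, delete the zeros, and if its length is odd also delete $a$. Repeat with $x^{(i+1)}$. *)

theory Defs
  imports Main "HOL.Real"
begin

(* Sequences are real lists; positions are 0-indexed internally. *)

definition highest_weight :: "real list \<Rightarrow> bool" where
  "highest_weight x \<longleftrightarrow>
     (\<forall>k. 1 \<le> k \<and> k \<le> length x div 2 \<longrightarrow> (\<Sum>i<k. x ! (2*i) - x ! (2*i+1)) \<ge> 0)"

definition Pplus :: "real \<Rightarrow> real list set" where
  "Pplus L = {x. (\<exists>N\<ge>1. length x = 2*N) \<and> (\<forall>a\<in>set x. a > 0)
                 \<and> sum_list x \<le> L \<and> highest_weight x}"

definition zero_starts :: "real list \<Rightarrow> nat list" where
  "zero_starts y = sorted_list_of_set
      {p. p < length y \<and> y ! p = 0 \<and> (p = 0 \<or> y ! (p - 1) \<noteq> 0)}"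

definition run_len :: "real list \<Rightarrow> nat \<Rightarrow> nat" where
  "run_len y p = length (takeWhile (\<lambda>b. b = 0) (drop p y))"

(* decomposition y = p1 0^z1 p2 0^z2 ... pm 0^zm (no leading zeros) *)
function decomp :: "real list \<Rightarrow> (real \<times> nat) list" where
  "decomp [] = []"
| "decomp (p # ys) = (p, length (takeWhile (\<lambda>b. b = 0) ys)) # decomp (dropWhile (\<lambda>b. b = 0) ys)"
  by pat_completeness auto
termination
  by (relation "measure length") (auto simp: le_imp_less_Suc length_dropWhile_le)

(* rules (b) and (c'): entries separated by an odd interior run of zeros are merged
   (merging is transitive along chains of odd runs); zeros are deleted; if the run at
   the right end is odd, the (merged) entry preceding it is deleted *)
fun grp :: "real \<Rightarrow> (real \<times> nat) list \<Rightarrow> real list" where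
  "grp acc [] = []"
| "grp acc [(p, z)] = (if odd z then [] else [acc + p])"
| "grp acc ((p, z) # q # rest) =
     (if odd z then grp (acc + p) (q # rest) else (acc + p) # grp 0 (q # rest))"

definition alg_step :: "real list \<Rightarrow> real \<times> nat \<times> real list \<times> real list" where
  "alg_step x =
    (let mu = Min (set x);
         y = map (\<lambda>a. a - mu) x;
         S = zero_starts y;
         J = concat (map (\<lambda>p. replicate ((run_len y p + 1) div 2) (sum_list (take p y))) S);
         nu = (\<Sum>p\<leftarrow>S. (run_len y p + 1) div 2);
         x' = grp 0 (decomp (dropWhile (\<lambda>b. b = 0) y))
     in (mu, nu, J, x'))"

(* Algorithm II with current N; first argument is fuel (the number of steps is at most N) *)
fun alg :: "nat \<Rightarrow> nat \<Rightarrow> real list \<Rightarrow> (real \<times> nat \<times> real list) list" where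
  "alg 0 N x = []"
| "alg (Suc k) N x =
     (case alg_step x of (mu, nu, J, x') \<Rightarrow>
        (mu, nu, J) # (if N - nu = 0 then [] else alg k (N - nu) x'))"

definition phi :: "real list \<Rightarrow> (real \<times> nat \<times> real list) list" where
  "phi x = alg (length x div 2) (length x div 2) x"

(* the set R; data indexed 0..s-1 *)
definition Rset :: "real \<Rightarrow> (real \<times> nat \<times> real list) list set" where
  "Rset L = {D. let s = length D;
                    mu = (\<lambda>i. fst (D ! i));
                    nu = (\<lambda>i. fst (snd (D ! i)));
                    J = (\<lambda>i. snd (snd (D ! i)));
                    NN = (\<lambda>i. \<Sum>j\<in>{i..<s}. nu j);
                    lam = (\<lambda>i. \<Sum>l\<le>i. mu l);
                    q = (\<lambda>i. L - 2 * (\<Sum>k<s. min (lam i) (lam k) * real (nu k)))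
                in s \<ge> 1
                   \<and> (\<forall>i<s. mu i > 0 \<and> nu i \<ge> 1)
                   \<and> (\<Sum>i<s. real (NN i) * mu i) \<le> L / 2
                   \<and> (\<forall>i<s. length (J i) = nu i \<and> sorted (J i)
                          \<and> (\<forall>j<nu i. 0 \<le> J i ! j \<and> J i ! j \<le> q i))}"

end

theory Submission
  imports Defs
begin

fun undecomp :: "(real \<times> nat) list \<Rightarrow> real list" where
  "undecomp [] = []"
| "undecomp ((p,z) # E) = p # replicate z 0 @ undecomp E"

fun JE :: "real \<Rightarrow> (real \<times> nat) list \<Rightarrow> real list" where
  "JE s [] = []"
| "JE s ((p,z) # E) = replicate ((z+1) div 2) (s+p) @ JE (s+p) E"

fun shift :: "real \<Rightarrow> real list \<Rightarrow> real list" where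
  "shift a [] = []"
| "shift a (c # r) = (a + c) # r"

lemma takeWhile_zero_rep: "takeWhile (\<lambda>b. b = (0::real)) ys = replicate (length (takeWhile (\<lambda>b. b = 0) ys)) 0"
  by (metis (mono_tags, lifting) replicate_length_same set_takeWhileD)

lemma undecomp_decomp: "undecomp (decomp l) = l"
proof (induction l rule: decomp.induct)
  case 1 then show ?case by simp
next
  case (2 p ys)
  then show ?case
    by (simp, metis takeWhile_dropWhile_id takeWhile_zero_rep)
qed

lemma decomp_fst_nz: "(l = [] \<or> hd l \<noteq> 0) \<Longrightarrow> \<forall>e\<in>set (decomp l). fst e \<noteq> 0"
proof (induction l rule: decomp.induct)
  case 1 then show ?case by simp
next
  case (2 p ys)
  have "dropWhile (\<lambda>b. b = 0) ys = [] \<or> hd (dropWhile (\<lambda>b. b = 0) ys) \<noteq> 0"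
    by (metis (mono_tags, lifting) hd_dropWhile)
  with 2 show ?case by auto
qed

lemma decomp_fst_set: "\<forall>e\<in>set (decomp l). fst e \<in> set l"
proof (induction l rule: decomp.induct)
  case 1 then show ?case by simp
next
  case (2 p ys)
  then show ?case by (auto dest: set_dropWhileD)
qed

lemma decomp_rep: "(U = [] \<or> hd U \<noteq> 0) \<Longrightarrow>
   decomp (p # replicate z 0 @ U) = (p, z) # decomp U"
proof -
  assume h: "U = [] \<or> hd U \<noteq> 0"
  have t: "takeWhile (\<lambda>b. b = 0) (replicate z 0 @ U) = replicate z (0::real)"
    using h by (cases U) (auto simp: takeWhile_append)
  have d: "dropWhile (\<lambda>b. b = 0) (replicate z 0 @ U) = U"
    using h by (cases U) (auto simp: dropWhile_append)
  show ?thesis using t d by simp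
qed

lemma undecomp_hd: "E \<noteq> [] \<Longrightarrow> undecomp E \<noteq> [] \<and> hd (undecomp E) = fst (hd E)"
  by (cases E) auto

lemma decomp_undecomp: "(\<forall>e\<in>set E. fst e \<noteq> 0) \<Longrightarrow> decomp (undecomp E) = E"
proof (induction E)
  case Nil then show ?case by simp
next
  case (Cons e E)
  obtain p z where e: "e = (p,z)" by force
  have "undecomp E = [] \<or> hd (undecomp E) \<noteq> 0"
    using Cons.prems undecomp_hd by (cases E) auto
  then show ?case using Cons e by (simp add: decomp_rep del: decomp.simps)
qed

lemma decomp_undecomp2: "(\<forall>e\<in>set E. fst e \<noteq> 0) \<Longrightarrow> decomp (undecomp ((p,z)#E)) = (p,z) # E"
proof -
  assume h: "\<forall>e\<in>set E. fst e \<noteq> 0"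
  have "undecomp E = [] \<or> hd (undecomp E) \<noteq> 0"
    using h undecomp_hd by (cases E) auto
  then show ?thesis using h by (simp add: decomp_rep decomp_undecomp del: decomp.simps)
qed

fun zs :: "nat \<Rightarrow> bool \<Rightarrow> real list \<Rightarrow> nat list" where
  "zs i b [] = []"
| "zs i b (a # r) = (if a = 0 \<and> \<not> b then [i] else []) @ zs (Suc i) (a = 0) r"

lemma zs_ge: "\<forall>e\<in>set (zs i b y). i \<le> e"
  by (induction y arbitrary: i b) (auto, fastforce+)

lemma zs_sorted: "sorted_wrt (<) (zs i b y)"
proof (induction y arbitrary: i b)
  case Nil then show ?case by simp
next
  case (Cons a r)
  then show ?case using zs_ge[of "Suc i" "a = 0" r] by (fastforce simp: sorted_wrt_append Suc_le_eq)
qed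

lemma zs_set: "set (zs i b y) = (\<lambda>q. q + i) ` {q. q < length y \<and> y!q = 0 \<and> (q = 0 \<longrightarrow> \<not> b) \<and> (q > 0 \<longrightarrow> y!(q-1) \<noteq> 0)}"
proof (induction y arbitrary: i b)
  case Nil then show ?case by simp
next
  case (Cons a r)
  show ?case
  proof (rule set_eqI, rule iffI)
    fix e assume "e \<in> set (zs i b (a # r))"
    then consider "a = 0 \<and> \<not> b \<and> e = i" | "e \<in> set (zs (Suc i) (a = 0) r)" by (auto split: if_splits)
    then show "e \<in> (\<lambda>q. q + i) ` {q. q < length (a # r) \<and> (a # r) ! q = 0 \<and> (q = 0 \<longrightarrow> \<not> b) \<and> (0 < q \<longrightarrow> (a # r) ! (q - 1) \<noteq> 0)}"
    proof cases
      case 1 then show ?thesis by (auto intro!: image_eqI[where x=0])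
    next
      case 2
      then obtain q where q: "e = q + Suc i" "q < length r" "r!q = 0" "q = 0 \<longrightarrow> \<not> (a = 0)" "q > 0 \<longrightarrow> r!(q-1) \<noteq> 0"
        using Cons.IH by auto
      show ?thesis
        apply (rule image_eqI[where x="Suc q"])
        using q by (auto simp: nth_Cons split: nat.splits)
    qed
  next
    fix e assume "e \<in> (\<lambda>q. q + i) ` {q. q < length (a # r) \<and> (a # r) ! q = 0 \<and> (q = 0 \<longrightarrow> \<not> b) \<and> (0 < q \<longrightarrow> (a # r) ! (q - 1) \<noteq> 0)}"
    then obtain q where q: "e = q + i" "q < length (a#r)" "(a#r)!q = 0" "q = 0 \<longrightarrow> \<not> b" "q > 0 \<longrightarrow> (a#r)!(q-1) \<noteq> 0"
      by auto
    show "e \<in> set (zs i b (a # r))"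
    proof (cases q)
      case 0 then show ?thesis using q by auto
    next
      case (Suc q')
      have "e \<in> set (zs (Suc i) (a = 0) r)"
        unfolding Cons.IH
        apply (rule image_eqI[where x=q'])
        using q Suc by (auto simp: nth_Cons split: nat.splits)
      then show ?thesis by simp
    qed
  qed
qed

lemma zero_starts_zs: "zero_starts y = zs 0 False y"
proof -
  have fin: "finite {p. p < length y \<and> y ! p = 0 \<and> (p = 0 \<or> y ! (p - 1) \<noteq> 0)}" by simp
  have st: "set (zs 0 False y) = {p. p < length y \<and> y ! p = 0 \<and> (p = 0 \<or> y ! (p - 1) \<noteq> 0)}"
    unfolding zs_set by auto
  have "sorted_list_of_set {p. p < length y \<and> y ! p = 0 \<and> (p = 0 \<or> y ! (p - 1) \<noteq> 0)} = zs 0 False y"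
    using sorted_list_of_set_unique[OF fin, of "zs 0 False y"] zs_sorted[of 0 False y] st
    by (metis distinct_card strict_sorted_iff)
  then show ?thesis unfolding zero_starts_def .
qed

fun Qr :: "bool \<Rightarrow> real \<Rightarrow> real list \<Rightarrow> real list" where
  "Qr b s [] = []"
| "Qr b s (a # r) = (if a = 0 \<and> \<not> b then replicate ((run_len (a#r) 0 + 1) div 2) s else []) @ Qr (a = 0) (s + a) r"

lemma zs_Qr: "concat (map (\<lambda>p. replicate ((run_len r (p-i) + 1) div 2) (s + sum_list (take (p-i) r))) (zs i b r)) = Qr b s r"
proof (induction r arbitrary: i b s)
  case Nil then show ?case by simp
next
  case (Cons a r)
  have eq: "map (\<lambda>p. replicate ((run_len (a#r) (p-i) + 1) div 2) (s + sum_list (take (p-i) (a#r)))) (zs (Suc i) (a=0) r)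
     = map (\<lambda>p. replicate ((run_len r (p - Suc i) + 1) div 2) ((s + a) + sum_list (take (p - Suc i) r))) (zs (Suc i) (a=0) r)"
  proof (rule map_cong[OF refl])
    fix p assume "p \<in> set (zs (Suc i) (a = 0) r)"
    then have "Suc i \<le> p" using zs_ge by blast
    then have "p - i = Suc (p - Suc i)" by simp
    then show "replicate ((run_len (a#r) (p-i) + 1) div 2) (s + sum_list (take (p-i) (a#r))) =
               replicate ((run_len r (p - Suc i) + 1) div 2) ((s + a) + sum_list (take (p - Suc i) r))"
      by (simp add: run_len_def add.assoc)
  qed
  have "concat (map (\<lambda>p. replicate ((run_len (a#r) (p-i) + 1) div 2) (s + sum_list (take (p-i) (a#r)))) (zs i b (a#r)))
     = (if a = 0 \<and> \<not> b then replicate ((run_len (a#r) 0 + 1) div 2) s else []) @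
       concat (map (\<lambda>p. replicate ((run_len (a#r) (p-i) + 1) div 2) (s + sum_list (take (p-i) (a#r)))) (zs (Suc i) (a=0) r))"
    by auto
  also have "\<dots> = (if a = 0 \<and> \<not> b then replicate ((run_len (a#r) 0 + 1) div 2) s else []) @ Qr (a = 0) (s + a) r"
    by (simp only: eq Cons.IH)
  finally show ?case by simp
qed

lemma Qr_JE: "Qr b s ys = (if b then [] else replicate ((length (takeWhile (\<lambda>b. b = 0) ys) + 1) div 2) s) @ JE s (decomp (dropWhile (\<lambda>b. b = 0) ys))"
proof (induction ys arbitrary: b s)
  case Nil then show ?case by simp
next
  case (Cons a r)
  show ?case
  proof (cases "a = 0")
    case True
    then show ?thesis using Cons.IH[of True s] by (simp add: run_len_def)
  next
    case False
    then show ?thesis using Cons.IH[of False "s + a"] by simp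
  qed
qed

lemma Jdefs: "concat (map (\<lambda>p. replicate ((run_len y p + 1) div 2) (sum_list (take p y))) (zero_starts y))
   = JE 0 (decomp (0 # y))"
proof -
  have "concat (map (\<lambda>p. replicate ((run_len y p + 1) div 2) (sum_list (take p y))) (zero_starts y))
     = concat (map (\<lambda>p. replicate ((run_len y (p-0) + 1) div 2) (0 + sum_list (take (p-0) y))) (zs 0 False y))"
    by (simp add: zero_starts_zs)
  also have "\<dots> = Qr False 0 y" by (rule zs_Qr)
  finally show ?thesis by (simp add: Qr_JE)
qed

lemma alg_step_eq: "alg_step x =
   (let mu = Min (set x); y = map (\<lambda>a. a - mu) x; E = decomp (0 # y)
    in (mu, length (JE 0 E), JE 0 E, grp 0 (tl E)))"
proof -
  have len: "\<And>y. (\<Sum>p\<leftarrow>zero_starts y. (run_len y p + 1) div 2) =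
      length (concat (map (\<lambda>p. replicate ((run_len y p + 1) div 2) (sum_list (take p y))) (zero_starts y)))"
    by (simp add: length_concat o_def)
  show ?thesis unfolding alg_step_def Let_def
    by (simp only: len Jdefs) simp
qed

function insD :: "real \<times> nat \<Rightarrow> real list \<Rightarrow> real list \<Rightarrow> (real \<times> nat) list" where
  "insD (p,z) xs (j # js) = (if j = 0 then insD (p, z+2) xs js else
      (case xs of [] \<Rightarrow> (p,z) # insD (j,1) [] (map (\<lambda>v. v - j) js)
       | c # xs' \<Rightarrow> (if j < c then (p,z) # insD (j,1) ((c-j) # xs') (map (\<lambda>v. v - j) js)
                   else (p,z) # insD (c,0) xs' (map (\<lambda>v. v - c) (j # js)))))"
| "insD (p,z) (c # xs) [] = (p,z) # insD (c,0) xs []"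
| "insD (p,z) [] [] = [(p,z)]"
  by pat_completeness auto
termination
  by (relation "measure (\<lambda>(_, xs, js). length xs + length js)") auto

lemma insD_ne: "insD P xs js \<noteq> []"
  by (induction P xs js rule: insD.induct) (auto split: list.splits)

lemma insD_hd: "\<exists>k rest. insD (p,z) xs js = (p, z + 2*k) # rest"
proof (induction "(p,z)" xs js arbitrary: p z rule: insD.induct)
  case (1 p z xs j js)
  show ?case
  proof (cases "j = 0")
    case True
    then obtain k rest where "insD (p, z+2) xs js = (p, z+2+2*k) # rest" using 1 by blast
    then show ?thesis using True by (intro exI[where x="Suc k"]) auto
  next
    case False then show ?thesis by (auto split: list.splits intro: exI[where x=0])
  qed
qed auto

lemma insD_fst_hd: "fst (hd (insD (p,z) xs js)) = p"
  using insD_hd[of p z xs js] by auto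

lemma shift_shift: "shift a (shift b G) = shift (a+b) G"
  by (cases G) (simp_all add: add.assoc)

lemma grp_shift: "grp a E = shift a (grp 0 E)"
proof (induction E arbitrary: a)
  case Nil then show ?case by simp
next
  case (Cons e E)
  obtain p z where e: "e = (p,z)" by force
  show ?case
  proof (cases E)
    case Nil then show ?thesis using e by simp
  next
    case (Cons q rest)
    then show ?thesis using e Cons.IH[of "a+p"] Cons.IH[of p] by (simp add: shift_shift)
  qed
qed

lemma grp_cons: "E' \<noteq> [] \<Longrightarrow> grp acc ((p,z)#E') = (if odd z then grp (acc+p) E' else (acc+p) # grp 0 E')"
  by (cases E') auto

lemma JE_shift: "JE s E = map (\<lambda>v. s + v) (JE 0 E)"
proof (induction E arbitrary: s)
  case Nil then show ?case by simp
next
  case (Cons e E)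
  obtain p z where e: "e = (p,z)" by force
  show ?case using Cons.IH[of "s+p"] Cons.IH[of p] e by (simp add: add.assoc)
qed

lemma rep_suc_app: "replicate n x @ x # l = replicate (Suc n) x @ l"
  by (simp add: replicate_app_Cons_same)

lemma insD_JE: "JE s (insD (p,z) xs js) = replicate ((z+1) div 2) (s+p) @ map (\<lambda>v. s+p+v) js"
proof (induction "(p,z)" xs js arbitrary: p z s rule: insD.induct)
  case (1 p z xs j js)
  show ?case
  proof (cases "j = 0")
    case True
    have "(z + 2 + 1) div 2 = Suc ((z+1) div 2)" by simp
    then show ?thesis using True 1 by (simp add: rep_suc_app)
  next
    case False
    show ?thesis
    proof (cases xs)
      case Nil
      then show ?thesis using False 1 by (simp add: o_def add.assoc)
    next
      case (Cons c xs')
      show ?thesis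
      proof (cases "j < c")
        case True
        then show ?thesis using False Cons 1 by (simp add: o_def add.assoc)
      next
        case f2: False
        then show ?thesis using False Cons 1 by (simp add: o_def add.assoc)
      qed
    qed
  qed
next
  case (2 p z c xs) then show ?case by (simp add: add.assoc)
next
  case (3 p z) then show ?case by simp
qed

lemma insD_grp: "grp acc (insD (p,z) xs js) = (if even z then (acc+p) # xs else shift (acc+p) xs)"
proof (induction "(p,z)" xs js arbitrary: p z acc rule: insD.induct)
  case (1 p z xs j js)
  show ?case
  proof (cases "j = 0")
    case True
    then show ?thesis using 1 by simp
  next
    case False
    show ?thesis
    proof (cases xs)
      case Nil
      then show ?thesis using False 1 by (simp add: grp_cons insD_ne)
    next
      case (Cons c xs')
      show ?thesis
      proof (cases "j < c")
        case True
        then show ?thesis using False Cons 1 by (simp add: grp_cons insD_ne)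
      next
        case f2: False
        have eq: "insD (p,z) xs (j#js) = (p,z) # insD (c,0) xs' (map (\<lambda>v. v - c) (j # js))"
          using False f2 Cons by simp
        have ih: "\<And>a. grp a (insD (c,0) xs' ((j - c) # map (\<lambda>v. v - c) js)) = (a + c) # xs'"
          using False f2 Cons 1(4) by simp
        show ?thesis unfolding eq using Cons by (simp add: grp_cons insD_ne ih del: insD.simps)
      qed
    qed
  qed
next
  case (2 p z c xs) then show ?case by (simp add: grp_cons insD_ne)
next
  case (3 p z) then show ?case by simp
qed

lemma insD_split_lt: "j \<noteq> 0 \<Longrightarrow> j < c \<Longrightarrow> insD (p,z) (c#xs) (j#js) = (p,z) # insD (j,1) ((c-j)#xs) (map (\<lambda>v. v - j) js)"
  by simp
lemma insD_split_ge: "j \<noteq> 0 \<Longrightarrow> \<not> j < c \<Longrightarrow> insD (p,z) (c#xs) (j#js) = (p,z) # insD (c,0) xs (map (\<lambda>v. v - c) (j#js))"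
  by (simp del: list.map)
lemma insD_split_nil: "j \<noteq> 0 \<Longrightarrow> insD (p,z) [] (j#js) = (p,z) # insD (j,1) [] (map (\<lambda>v. v - j) js)"
  by simp
lemma insD_bump0: "insD (p,z) xs (0#js) = insD (p,z+2) xs js"
  by simp

lemma insD_bumps: "insD (p,z) xs (replicate k 0 @ js) = insD (p, z + 2*k) xs js"
  by (induction k arbitrary: z) (simp_all del: insD.simps add: insD_bump0)

lemma sorted_map_sub: "sorted js \<Longrightarrow> sorted (map (\<lambda>v. v - (j::real)) js)"
  by (simp add: sorted_map sorted_wrt_mono_rel[of _ "(\<le>)"])

lemma insD_all_pos: "\<forall>e\<in>set (tl (insD (q,w) X Y)). fst e > 0 \<Longrightarrow> q > 0 \<Longrightarrow> \<forall>e\<in>set (insD (q,w) X Y). fst e > 0"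
proof -
  assume a: "\<forall>e\<in>set (tl (insD (q,w) X Y)). fst e > 0" "q > 0"
  obtain k rest where "insD (q,w) X Y = (q, w+2*k) # rest" using insD_hd by blast
  then show ?thesis using a by auto
qed

lemma insD_pos: "\<forall>c\<in>set xs. c > 0 \<Longrightarrow> sorted js \<Longrightarrow> \<forall>v\<in>set js. v \<ge> 0 \<Longrightarrow>
   \<forall>e\<in>set (tl (insD (p,z) xs js)). fst e > 0"
proof (induction "(p,z)" xs js arbitrary: p z rule: insD.induct)
  case (1 p z xs j js)
  have sj: "sorted js" "\<forall>v\<in>set js. j \<le> v" using "1.prems"(2) by auto
  have j0: "j \<ge> 0" using "1.prems"(3) by auto
  show ?case
  proof (cases "j = 0")
    case True
    then show ?thesis using 1(1) "1.prems" sj by (simp add: insD_bump0 del: insD.simps)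
  next
    case False
    have jp: "j > 0" using False j0 by simp
    show ?thesis
    proof (cases xs)
      case Nil
      have "\<forall>e\<in>set (tl (insD (j,1) [] (map (\<lambda>v. v - j) js))). fst e > 0"
        using 1(2)[OF False Nil] Nil sj by (simp add: sorted_map_sub)
      then have "\<forall>e\<in>set (insD (j,1) [] (map (\<lambda>v. v - j) js)). fst e > 0"
        using jp insD_all_pos by blast
      then show ?thesis using Nil False by (simp only: insD_split_nil) simp
    next
      case (Cons c xs')
      show ?thesis
      proof (cases "j < c")
        case True
        have "\<forall>e\<in>set (tl (insD (j,1) ((c-j)#xs') (map (\<lambda>v. v - j) js))). fst e > 0"
          using 1(3)[OF False Cons True] Cons sj True "1.prems"(1) by (simp add: sorted_map_sub)
        then have "\<forall>e\<in>set (insD (j,1) ((c-j)#xs') (map (\<lambda>v. v - j) js)). fst e > 0"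
          using jp insD_all_pos by blast
        then show ?thesis using Cons False True by (simp only: insD_split_lt) simp
      next
        case f2: False
        have h: "\<forall>e\<in>set (tl (insD (c,0) xs' (map (\<lambda>v. v - c) (j#js)))). fst e > 0"
          using 1(4)[OF False Cons f2] Cons sj f2 "1.prems"(1,2) order.trans[of c j] less_le_not_le
          by (auto simp: sorted_map_sub simp del: list.map)
        have cp: "c > 0" using Cons "1.prems"(1) by simp
        have "\<forall>e\<in>set (insD (c,0) xs' (map (\<lambda>v. v - c) (j#js))). fst e > 0"
          using insD_all_pos[OF h cp] .
        then show ?thesis using Cons False f2 by (simp only: insD_split_ge) simp
      qed
    qed
  qed
next
  case (2 p z c xs)
  then have "\<forall>e\<in>set (insD (c,0) xs []). fst e > 0" using insD_all_pos by simp
  then show ?case by simp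
next
  case (3 p z) then show ?case by simp
qed

lemma insD_sum: "\<forall>c\<in>set xs. c > 0 \<Longrightarrow> sorted js \<Longrightarrow> \<forall>v\<in>set js. 0 \<le> v \<and> v \<le> M \<Longrightarrow>
   sum_list xs \<le> M \<Longrightarrow> 0 \<le> M \<Longrightarrow> sum_list (map fst (insD (p,z) xs js)) \<le> p + M"
proof (induction "(p,z)" xs js arbitrary: p z M rule: insD.induct)
  case (1 p z xs j js)
  have sj: "sorted js" "\<forall>v\<in>set js. j \<le> v" using "1.prems"(2) by auto
  have j0: "j \<ge> 0" "j \<le> M" using "1.prems"(3) by auto
  show ?case
  proof (cases "j = 0")
    case True
    then show ?thesis using 1(1) "1.prems" sj by (simp add: insD_bump0 del: insD.simps)
  next
    case False
    show ?thesis
    proof (cases xs)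
      case Nil
      have "sum_list (map fst (insD (j,1) [] (map (\<lambda>v. v - j) js))) \<le> j + (M - j)"
        using 1(2)[OF False Nil, of "M - j"] Nil sj "1.prems" j0 by (auto simp: sorted_map_sub)
      then show ?thesis using Nil False by (simp only: insD_split_nil) simp
    next
      case (Cons c xs')
      have sxs: "sum_list xs' \<ge> 0" using "1.prems"(1) Cons by (auto intro: sum_list_nonneg less_imp_le)
      show ?thesis
      proof (cases "j < c")
        case True
        have "sum_list (map fst (insD (j,1) ((c-j)#xs') (map (\<lambda>v. v - j) js))) \<le> j + (M - j)"
          using 1(3)[OF False Cons True, of "M - j"] Cons sj True "1.prems" j0 by (auto simp: sorted_map_sub)
        then show ?thesis using Cons False True by (simp only: insD_split_lt) simp
      next
        case f2: False
        have "sum_list (map fst (insD (c,0) xs' (map (\<lambda>v. v - c) (j#js)))) \<le> c + (M - c)"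
          using 1(4)[OF False Cons f2, of "M - c"] Cons sj f2 "1.prems" j0 sxs order.trans[of c j]
          by (auto simp: sorted_map_sub simp del: list.map)
        then show ?thesis using Cons False f2 by (simp only: insD_split_ge) simp
      qed
    qed
  qed
next
  case (2 p z c xs)
  have sxs: "sum_list xs \<ge> 0" using "2.prems"(1) by (auto intro: sum_list_nonneg less_imp_le)
  have "sum_list (map fst (insD (c,0) xs [])) \<le> c + (M - c)"
    using 2(1)[of "M - c"] "2.prems" sxs by auto
  then show ?case by simp
next
  case (3 p z) then show ?case by simp
qed

lemma grp_pos: "a \<ge> 0 \<Longrightarrow> \<forall>e\<in>set D. fst e > 0 \<Longrightarrow> \<forall>v\<in>set (grp a D). v > 0"
  by (induction a D rule: grp.induct) auto

lemma grp_nonneg: "a \<ge> 0 \<Longrightarrow> \<forall>e\<in>set D. fst e \<ge> 0 \<Longrightarrow> \<forall>v\<in>set (grp a D). v \<ge> 0"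
  by (induction a D rule: grp.induct) auto

lemma grp_sum: "a \<ge> 0 \<Longrightarrow> \<forall>e\<in>set D. fst e \<ge> 0 \<Longrightarrow> sum_list (grp a D) \<le> a + sum_list (map fst D)"
proof (induction a D rule: grp.induct)
  case (1 acc) then show ?case by simp
next
  case (2 acc p z) then show ?case by auto
next
  case (3 acc p z q rest)
  have pn: "p \<ge> 0" "\<forall>e\<in>set (q#rest). fst e \<ge> 0" using "3.prems" by auto
  show ?case
  proof (cases "odd z")
    case True
    have "sum_list (grp (acc+p) (q#rest)) \<le> acc + p + sum_list (map fst (q#rest))"
      using "3.IH"(1)[OF True] pn "3.prems"(1) by simp
    then show ?thesis using True by simp
  next
    case False
    have "sum_list (grp 0 (q#rest)) \<le> 0 + sum_list (map fst (q#rest))"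
      using "3.IH"(2)[OF False] pn by simp
    then show ?thesis using False by simp
  qed
qed

lemma grp_hd: "grp a D = c # r \<Longrightarrow> \<forall>e\<in>set D. fst e \<ge> 0 \<Longrightarrow> c \<ge> a"
proof -
  assume h: "grp a D = c # r" "\<forall>e\<in>set D. fst e \<ge> 0"
  have "shift a (grp 0 D) = c # r" using h(1) grp_shift[of a D] by metis
  then obtain c' where "grp 0 D = c' # r" "c = a + c'" by (cases "grp 0 D") auto
  moreover have "c' \<ge> 0" using grp_nonneg[of 0 D] h(2) calculation by auto
  ultimately show ?thesis by simp
qed

lemma grp_nil_even: "grp a D = [] \<Longrightarrow> even (length (undecomp D))"
proof (induction D arbitrary: a)
  case Nil then show ?case by simp
next
  case (Cons e D)
  obtain p z where e: "e = (p,z)" by force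
  show ?case
  proof (cases D)
    case Nil then show ?thesis using Cons.prems e by (auto split: if_splits)
  next
    case (Cons q rest)
    then show ?thesis using Cons.prems Cons.IH e by (auto split: if_splits)
  qed
qed

lemma len_undecomp: "length (undecomp E) = 2 * length (JE s E) + length (grp a E)"
proof (induction E arbitrary: s a)
  case Nil then show ?case by simp
next
  case (Cons e E)
  obtain p z where e: "e = (p,z)" by force
  show ?case
  proof (cases E)
    case Nil then show ?thesis using e by auto
  next
    case (Cons q rest)
    then show ?thesis using Cons.IH e by auto
  qed
qed

lemma JE_bounds: "\<forall>e\<in>set E. fst e \<ge> 0 \<Longrightarrow> \<forall>v\<in>set (JE s E). s \<le> v \<and> v \<le> s + sum_list (map fst E)"
proof (induction E arbitrary: s)
  case Nil then show ?case by simp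
next
  case (Cons e E)
  obtain p z where e: "e = (p,z)" by force
  have "sum_list (map fst E) \<ge> 0" using Cons.prems by (intro sum_list_nonneg) auto
  then show ?case using Cons e by (force split: if_splits)
qed

lemma JE_sorted: "\<forall>e\<in>set E. fst e \<ge> 0 \<Longrightarrow> sorted (JE s E)"
proof (induction E arbitrary: s)
  case Nil then show ?case by simp
next
  case (Cons e E)
  obtain p z where e: "e = (p,z)" by force
  then show ?case using Cons JE_bounds[of E "s+p"] by (auto simp: sorted_append)
qed

lemma lemmaA: "\<forall>e\<in>set D. fst e > 0 \<Longrightarrow> insD (p,z) (grp 0 D) (JE 0 D) = (p,z) # D"
proof (induction D arbitrary: p z)
  case Nil then show ?case by simp
next
  case (Cons e D')
  obtain p2 z2 where e: "e = (p2,z2)" by force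
  define G where "G = grp 0 D'"
  define J0 where "J0 = JE 0 D'"
  define m where "m = (z2+1) div 2"
  have p2: "p2 > 0" using Cons.prems e by auto
  have posD': "\<forall>e\<in>set D'. fst e > 0" using Cons.prems by auto
  have IH: "\<And>p z. insD (p,z) G J0 = (p,z) # D'" using Cons.IH posD' G_def J0_def by simp
  have J0nn: "\<forall>v\<in>set J0. v \<ge> 0" using JE_bounds[of D' 0] posD' J0_def by (auto simp: less_imp_le)
  have JEe: "JE 0 (e # D') = replicate m p2 @ map (\<lambda>v. p2 + v) J0"
    using e m_def J0_def JE_shift[of p2 D'] by simp
  have mapback: "map (\<lambda>v. v - p2) (map (\<lambda>v. p2 + v) J0) = J0" by (simp add: o_def)
  show ?case
  proof (cases "odd z2")
    case False
    have grpe: "grp 0 (e # D') = p2 # G"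
      using False e G_def by (cases D') auto
    show ?thesis
    proof (cases "z2 = 0")
      case True
      then have m0: "m = 0" using m_def by simp
      show ?thesis
      proof (cases J0)
        case Nil
        then show ?thesis unfolding grpe JEe using m0 IH e True by simp
      next
        case (Cons j0 J0')
        have "p2 + j0 \<noteq> 0" "\<not> p2 + j0 < p2" using J0nn Cons p2 by auto
        then have "insD (p,z) (p2 # G) (replicate m p2 @ map (\<lambda>v. p2 + v) J0) = (p,z) # insD (p2,0) G J0"
          using m0 Cons insD_split_ge[of "p2+j0" p2 p z G "map (\<lambda>v. p2 + v) J0'"]
          by (simp del: insD.simps add: o_def)
        then show ?thesis unfolding grpe JEe using IH e True by simp
      qed
    next
      case nz: False
      then have m1: "m \<ge> 1" "z2 = 2*m" using False m_def by presburger+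
      then obtain m' where m': "m = Suc m'" by (cases m) auto
      have "insD (p,z) (p2 # G) (replicate m p2 @ map (\<lambda>v. p2 + v) J0)
          = (p,z) # insD (p2,0) G (map (\<lambda>v. v - p2) (replicate m p2 @ map (\<lambda>v. p2 + v) J0))"
        using m' p2 insD_split_ge[of p2 p2 p z G "replicate m' p2 @ map (\<lambda>v. p2 + v) J0"]
        by (simp del: insD.simps)
      also have "map (\<lambda>v. v - p2) (replicate m p2 @ map (\<lambda>v. p2 + v) J0) = replicate m 0 @ J0"
        by (simp add: o_def)
      also have "insD (p2,0) G (replicate m 0 @ J0) = insD (p2, z2) G J0"
        using m1 by (simp only: insD_bumps) simp
      finally show ?thesis unfolding grpe JEe using IH e by simp
    qed
  next
    case True
    then have m1: "m \<ge> 1" "z2 = 1 + 2*(m-1)" using m_def by presburger+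
    then obtain m' where m': "m = Suc m'" by (cases m) auto
    have grpe: "grp 0 (e # D') = shift p2 G"
      using True e G_def grp_shift[of p2 D'] by (cases D') auto
    have tailmap: "map (\<lambda>v. v - p2) (replicate m' p2 @ map (\<lambda>v. p2 + v) J0) = replicate m' 0 @ J0"
      by (simp add: o_def)
    have bump: "insD (p2,1) G (replicate m' 0 @ J0) = insD (p2, z2) G J0"
      using m1 m' by (simp only: insD_bumps) simp
    show ?thesis
    proof (cases G)
      case Nil
      have "insD (p,z) [] (replicate m p2 @ map (\<lambda>v. p2 + v) J0)
          = (p,z) # insD (p2,1) [] (map (\<lambda>v. v - p2) (replicate m' p2 @ map (\<lambda>v. p2 + v) J0))"
        using m' p2 insD_split_nil[of p2 p z "replicate m' p2 @ map (\<lambda>v. p2 + v) J0"]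
        by (simp del: insD.simps)
      then show ?thesis unfolding grpe JEe using IH e Nil tailmap bump by simp
    next
      case (Cons c' r)
      have gp: "\<forall>v\<in>set G. v > 0" using grp_pos[of 0 D'] posD' G_def by simp
      have c'p: "c' > 0" using gp Cons by simp
      have "insD (p,z) ((p2 + c') # r) (replicate m p2 @ map (\<lambda>v. p2 + v) J0)
          = (p,z) # insD (p2,1) ((p2 + c' - p2) # r) (map (\<lambda>v. v - p2) (replicate m' p2 @ map (\<lambda>v. p2 + v) J0))"
        using m' p2 c'p insD_split_lt[of p2 "p2 + c'" p z r "replicate m' p2 @ map (\<lambda>v. p2 + v) J0"]
        by (simp del: insD.simps)
      then show ?thesis unfolding grpe JEe using IH e Cons tailmap bump by simp
    qed
  qed
qed

fun hwb :: "real \<Rightarrow> bool \<Rightarrow> real list \<Rightarrow> bool" where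
  "hwb c b [] = True"
| "hwb c True (a # r) = hwb (c + a) False r"
| "hwb c False (a # r) = (c - a \<ge> 0 \<and> hwb (c - a) True r)"

lemma hwb_gen: "hwb c True x \<longleftrightarrow> (\<forall>k. 1 \<le> k \<and> k \<le> length x div 2 \<longrightarrow> c + (\<Sum>i<k. x!(2*i) - x!(2*i+1)) \<ge> 0)"
proof (induction x arbitrary: c rule: induct_list012)
  case 1 then show ?case by simp
next
  case (2 a) then show ?case by simp
next
  case (3 a b r)
  have S: "\<And>k'. (\<Sum>i<Suc k'. (a#b#r)!(2*i) - (a#b#r)!(2*i+1)) = (a - b) + (\<Sum>i<k'. r!(2*i) - r!(2*i+1))"
    by (subst sum.lessThan_Suc_shift) (simp add: numeral_2_eq_2)
  have L: "hwb c True (a#b#r) \<longleftrightarrow> c + (a - b) \<ge> 0 \<and> hwb (c + (a - b)) True r"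
    by (simp add: algebra_simps)
  show ?case
  proof
    assume h: "hwb c True (a#b#r)"
    show "\<forall>k. 1 \<le> k \<and> k \<le> length (a#b#r) div 2 \<longrightarrow> c + (\<Sum>i<k. (a#b#r)!(2*i) - (a#b#r)!(2*i+1)) \<ge> 0"
    proof (intro allI impI)
      fix k assume k: "1 \<le> k \<and> k \<le> length (a#b#r) div 2"
      then obtain k' where k': "k = Suc k'" by (cases k) auto
      show "c + (\<Sum>i<k. (a#b#r)!(2*i) - (a#b#r)!(2*i+1)) \<ge> 0"
      proof (cases k')
        case 0 then show ?thesis using h L k' S by simp
      next
        case (Suc k'')
        have "c + (a - b) + (\<Sum>i<k'. r!(2*i) - r!(2*i+1)) \<ge> 0"
          using h L "3.IH"(1)[of "c + (a - b)"] k k' Suc by auto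
        then show ?thesis using k' S by simp
      qed
    qed
  next
    assume h: "\<forall>k. 1 \<le> k \<and> k \<le> length (a#b#r) div 2 \<longrightarrow> c + (\<Sum>i<k. (a#b#r)!(2*i) - (a#b#r)!(2*i+1)) \<ge> 0"
    have h1: "c + (a - b) \<ge> 0" using h[rule_format, of 1] S[of 0] by simp
    have "\<forall>k. 1 \<le> k \<and> k \<le> length r div 2 \<longrightarrow> c + (a - b) + (\<Sum>i<k. r!(2*i) - r!(2*i+1)) \<ge> 0"
    proof (intro allI impI)
      fix k assume "1 \<le> k \<and> k \<le> length r div 2"
      then have "c + (\<Sum>i<Suc k. (a#b#r)!(2*i) - (a#b#r)!(2*i+1)) \<ge> 0" using h by auto
      then show "c + (a - b) + (\<Sum>i<k. r!(2*i) - r!(2*i+1)) \<ge> 0" using S by simp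
    qed
    then show "hwb c True (a#b#r)" using L h1 "3.IH"(1) by simp
  qed
qed

lemma hw_hwb: "highest_weight x \<longleftrightarrow> hwb 0 True x"
  unfolding highest_weight_def hwb_gen by simp

lemma hw_map: "highest_weight (map (\<lambda>a. a + d) x) \<longleftrightarrow> highest_weight x"
proof -
  have "\<And>k. k \<le> length x div 2 \<Longrightarrow> (\<Sum>i<k. map (\<lambda>a. a + d) x ! (2*i) - map (\<lambda>a. a + d) x ! (2*i+1)) = (\<Sum>i<k. x ! (2*i) - x ! (2*i+1))"
    by (rule sum.cong) auto
  then show ?thesis unfolding highest_weight_def by auto
qed

lemma hwb_zeros: "c \<ge> 0 \<Longrightarrow> hwb c b (replicate n 0 @ l) = hwb c (if even n then b else \<not> b) l"
proof (induction n arbitrary: b)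
  case 0 then show ?case by simp
next
  case (Suc n)
  then show ?case by (cases b) auto
qed

lemma lemmaH: "c \<ge> 0 \<Longrightarrow> a \<ge> 0 \<Longrightarrow> \<forall>e\<in>set D. fst e \<ge> 0 \<Longrightarrow> (\<not> b \<longrightarrow> c - a \<ge> 0) \<Longrightarrow>
  hwb (if b then c + a else c - a) b (undecomp D) \<Longrightarrow> hwb c b (grp a D)"
proof (induction D arbitrary: c b a)
  case Nil then show ?case by simp
next
  case (Cons e D')
  obtain p z where e: "e = (p,z)" by force
  have p0: "p \<ge> 0" using Cons.prems e by auto
  have fD': "\<forall>e\<in>set D'. fst e \<ge> 0" using Cons.prems by auto
  define c2 where "c2 = (if b then c + a + p else c - a - p)"
  have y: "hwb (if b then c + a else c - a) b (p # replicate z 0 @ undecomp D')"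
    using Cons.prems e by simp
  have c2nn: "c2 \<ge> 0" and ytail: "hwb c2 (if even z then \<not> b else b) (undecomp D')"
  proof -
    show "c2 \<ge> 0" using y c2_def Cons.prems p0 by (cases b) auto
    then show "hwb c2 (if even z then \<not> b else b) (undecomp D')"
      using y c2_def hwb_zeros[of c2] by (cases b) auto
  qed
  show ?case
  proof (cases D')
    case Nil
    then show ?thesis using c2nn c2_def e by (cases b) auto
  next
    case (Cons q rest)
    show ?thesis
    proof (cases "odd z")
      case True
      have "hwb c b (grp (a + p) D')"
        using Cons.IH[of c "a + p" b] fD' Cons.prems p0 c2nn c2_def ytail True
        by (cases b) (auto simp: add.assoc diff_diff_eq)
      then show ?thesis using e Cons True by simp
    next
      case False
      have "hwb c2 (\<not> b) (grp 0 D')"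
        using Cons.IH[of c2 0 "\<not> b"] fD' c2nn ytail False by (cases b) auto
      then show ?thesis using e Cons False c2_def c2nn by (cases b) (auto simp: algebra_simps)
    qed
  qed
qed

lemma lemmaH': "c \<ge> 0 \<Longrightarrow> a \<ge> 0 \<Longrightarrow> \<forall>e\<in>set D. fst e \<ge> 0 \<Longrightarrow> (b \<longleftrightarrow> even (length (undecomp D))) \<Longrightarrow>
  hwb c b (grp a D) \<Longrightarrow> hwb (if b then c + a else c - a) b (undecomp D)"
proof (induction D arbitrary: c b a)
  case Nil then show ?case by simp
next
  case (Cons e D')
  obtain p z where e: "e = (p,z)" by force
  have p0: "p \<ge> 0" using Cons.prems e by auto
  have fD': "\<forall>e\<in>set D'. fst e \<ge> 0" using Cons.prems by auto
  define c2 where "c2 = (if b then c + a + p else c - a - p)"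
  have lenD: "length (undecomp (e # D')) = Suc (z + length (undecomp D'))" using e by simp
  have key: "c2 \<ge> 0 \<and> hwb c2 (if even z then \<not> b else b) (undecomp D')"
  proof (cases D')
    case Nil
    show ?thesis
    proof (cases b)
      case True then show ?thesis using c2_def Cons.prems p0 Nil by simp
    next
      case False
      then have "even z" using Cons.prems(4) lenD Nil by simp
      then have "grp a (e # D') = [a + p]" using e Nil by simp
      then have "c - (a + p) \<ge> 0" using Cons.prems(5) False by simp
      then show ?thesis using c2_def False Nil by simp
    qed
  next
    case (Cons q rest)
    show ?thesis
    proof (cases "odd z")
      case True
      have gx: "hwb c b (grp (a + p) D')" using Cons.prems(5) e Cons True by simp
      have par: "b \<longleftrightarrow> even (length (undecomp D'))" using Cons.prems(4) lenD True by simp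
      have ih: "hwb (if b then c + (a + p) else c - (a + p)) b (undecomp D')"
        using Cons.IH[of c "a + p" b] fD' Cons.prems(1,2) p0 gx par by simp
      have c2nn: "c2 \<ge> 0"
      proof (cases b)
        case True then show ?thesis using c2_def Cons.prems p0 by simp
      next
        case False
        have "grp (a + p) D' \<noteq> []" using grp_nil_even par False by blast
        then obtain h r where hr: "grp (a + p) D' = h # r" by (cases "grp (a + p) D'") auto
        have "h \<ge> a + p" using grp_hd[OF hr fD'] .
        moreover have "c - h \<ge> 0" using gx hr False by simp
        ultimately show ?thesis using c2_def False by simp
      qed
      then show ?thesis using ih c2_def True by (cases b) (auto simp: diff_diff_eq add.assoc)
    next
      case False
      have gx: "hwb c b ((a + p) # grp 0 D')" using Cons.prems(5) e Cons False by simp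
      then have c2nn: "c2 \<ge> 0" and gx2: "hwb c2 (\<not> b) (grp 0 D')"
        using c2_def Cons.prems p0 by (cases b; auto simp: diff_diff_eq add.assoc)+
      have par: "\<not> b \<longleftrightarrow> even (length (undecomp D'))" using Cons.prems(4) lenD False by simp
      have "hwb (if \<not> b then c2 + 0 else c2 - 0) (\<not> b) (undecomp D')"
        using Cons.IH[of c2 0 "\<not> b"] fD' c2nn gx2 par by simp
      then show ?thesis using c2nn False by (cases b) auto
    qed
  qed
  have "hwb (if b then c + a else c - a) b (p # replicate z 0 @ undecomp D')"
    using key c2_def hwb_zeros[of c2] by (cases b) (auto simp: diff_diff_eq add.assoc)
  then show ?case using e by simp
qed

lemma sum_undecomp: "sum_list (undecomp D) = sum_list (map fst D)"
  by (induction D rule: undecomp.induct) (auto simp: sum_list_replicate)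

lemma JE_nil_if: "0 \<notin> set (undecomp D) \<Longrightarrow> JE s D = []"
  by (induction D arbitrary: s rule: undecomp.induct) (auto split: if_splits)

lemma JE_nonnil: "\<forall>e\<in>set D. fst e \<noteq> 0 \<Longrightarrow> 0 \<in> set (undecomp D) \<Longrightarrow> JE s D \<noteq> []"
proof (induction D arbitrary: s rule: undecomp.induct)
  case 1 then show ?case by simp
next
  case (2 p z E)
  show ?case
  proof (cases z)
    case 0 then show ?thesis using 2 by auto
  next
    case (Suc n) then show ?thesis by simp
  qed
qed

definition recon :: "real \<Rightarrow> real list \<Rightarrow> real list \<Rightarrow> real list" where
  "recon mu J x1 = map (\<lambda>a. a + mu) (tl (undecomp (insD (0,0) x1 J)))"

lemma sum_map_sub: "sum_list (map (\<lambda>a. a - m) x) = sum_list x - real (length x) * (m::real)"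
  by (induction x) (auto simp: algebra_simps)

lemma sum_map_add: "sum_list (map (\<lambda>a. a + m) x) = sum_list x + real (length x) * (m::real)"
  by (induction x) (auto simp: algebra_simps)

lemma FV:
  assumes pos: "\<forall>a\<in>set x. a > 0" and hw: "highest_weight x" and len: "length x = 2*N" and N1: "N \<ge> 1"
    and st: "alg_step x = (mu, nu, J, x1)"
  shows "mu > 0 \<and> nu = length J \<and> 1 \<le> nu \<and> nu \<le> N \<and> sorted J
    \<and> (\<forall>v\<in>set J. 0 \<le> v \<and> v \<le> sum_list x - 2 * real N * mu)
    \<and> (\<forall>a\<in>set x1. a > 0) \<and> highest_weight x1 \<and> length x1 = 2*(N - nu)
    \<and> sum_list x1 \<le> sum_list x - 2 * real N * mu \<and> x = recon mu J x1"
proof -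
  define m where "m = Min (set x)"
  define y where "y = map (\<lambda>a. a - m) x"
  define E where "E = decomp (0 # y)"
  have stv: "mu = m" "J = JE 0 E" "nu = length J" "x1 = grp 0 (tl E)"
    using st unfolding alg_step_eq Let_def m_def y_def E_def by auto
  have xne: "x \<noteq> []" using len N1 by auto
  have min_in: "m \<in> set x" using xne m_def by simp
  have min_le: "\<forall>a\<in>set x. m \<le> a" using m_def by simp
  have mpos: "m > 0" using min_in pos by blast
  have ynn: "\<forall>v\<in>set y. v \<ge> 0" using min_le y_def by auto
  have y0: "0 \<in> set y" using min_in y_def by force
  define z0 where "z0 = length (takeWhile (\<lambda>b. b = 0) y)"
  define rest where "rest = dropWhile (\<lambda>b. b = (0::real)) y"
  define D where "D = decomp rest"
  have Eeq: "E = (0, z0) # D" unfolding E_def z0_def D_def rest_def by simp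
  have yeq: "y = replicate z0 0 @ rest"
    unfolding z0_def rest_def by (metis takeWhile_dropWhile_id takeWhile_zero_rep)
  have resteq: "rest = undecomp D" unfolding D_def by (simp add: undecomp_decomp)
  have restnn: "\<forall>v\<in>set rest. v \<ge> 0" using ynn rest_def by (auto dest: set_dropWhileD)
  have resthd: "rest = [] \<or> hd rest \<noteq> 0" unfolding rest_def by (metis (mono_tags, lifting) hd_dropWhile)
  have Dpos: "\<forall>e\<in>set D. fst e > 0"
    using decomp_fst_nz[OF resthd] decomp_fst_set[of rest] restnn unfolding D_def
    by (metis less_eq_real_def)
  have Dnn: "\<forall>e\<in>set D. fst e \<ge> 0" using Dpos less_imp_le by blast
  have hwy: "hwb 0 True y"
  proof -
    have "y = map (\<lambda>a. a + (- m)) x" unfolding y_def by simp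
    then show ?thesis using hw hw_map hw_hwb by metis
  qed
  have z0even: "even z0"
  proof (rule ccontr)
    assume odd: "\<not> even z0"
    have "hwb 0 False rest" using hwy yeq hwb_zeros[of 0 True z0 rest] odd by simp
    moreover have "length y = z0 + length rest" using yeq by simp
    then have "rest \<noteq> []" using len odd y_def by auto
    then obtain r0 rr where rr: "rest = r0 # rr" by (cases rest) auto
    have "r0 > 0" using rr resthd restnn by (simp add: less_le)
    ultimately show False using rr by simp
  qed
  have Jeq: "J = replicate (z0 div 2) 0 @ JE 0 D"
  proof -
    have "(z0 + 1) div 2 = z0 div 2" using z0even by presburger
    then show ?thesis using stv Eeq by simp
  qed
  have x1eq: "x1 = grp 0 D" using stv Eeq by simp
  have leny: "length y = 2*N" using len y_def by simp
  have lenU: "length (undecomp D) = 2 * length (JE 0 D) + length (grp 0 D)" by (rule len_undecomp)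
  have lenJ: "length J = z0 div 2 + length (JE 0 D)" using Jeq by simp
  have lenrel: "2*N = 2 * length J + length x1"
    using leny yeq resteq lenU lenJ x1eq z0even by simp
  have nu1: "1 \<le> length J"
  proof (cases "z0 = 0")
    case True
    then have "0 \<in> set (undecomp D)" using y0 yeq resteq by simp
    then have "JE 0 D \<noteq> []" using JE_nonnil Dpos by (metis less_irrefl)
    then show ?thesis using lenJ by (cases "JE 0 D") auto
  next
    case False
    then have "z0 div 2 \<ge> 1" using z0even by presburger
    then show ?thesis using lenJ by simp
  qed
  have sumy: "sum_list y = sum_list x - 2 * real N * m" using y_def sum_map_sub len by simp
  have sumyD: "sum_list y = sum_list (map fst D)" using yeq resteq sum_undecomp by (simp add: sum_list_replicate)
  have JB: "\<forall>v\<in>set J. 0 \<le> v \<and> v \<le> sum_list (map fst D)"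
  proof -
    have "sum_list (map fst D) \<ge> 0" using Dnn by (intro sum_list_nonneg) auto
    then show ?thesis using JE_bounds[OF Dnn, of 0] Jeq by auto
  qed
  have sJ: "sorted J"
    using Jeq JE_sorted[OF Dnn, of 0] JE_bounds[OF Dnn, of 0] by (auto simp: sorted_append)
  have x1pos: "\<forall>a\<in>set x1. a > 0" using grp_pos[of 0 D] Dpos x1eq by simp
  have x1sum: "sum_list x1 \<le> sum_list (map fst D)" using grp_sum[of 0 D] Dnn x1eq by simp
  have hwD: "hwb 0 True (undecomp D)" using hwy yeq resteq hwb_zeros[of 0 True z0] z0even by simp
  have hwx1: "highest_weight x1" using lemmaH[of 0 0 D True] Dnn hwD x1eq hw_hwb by simp
  have recx: "x = recon mu J x1"
  proof -
    have "insD (0,0) x1 J = insD (0, 0 + 2 * (z0 div 2)) (grp 0 D) (JE 0 D)"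
      using Jeq x1eq insD_bumps by simp
    also have "0 + 2 * (z0 div 2) = z0" using z0even by simp
    also have "insD (0,z0) (grp 0 D) (JE 0 D) = (0,z0) # D" using lemmaA Dpos by simp
    finally have "tl (undecomp (insD (0,0) x1 J)) = y" using yeq resteq by simp
    then show ?thesis unfolding recon_def y_def stv(1) by (simp add: o_def)
  qed
  show ?thesis
    using mpos stv nu1 lenrel sJ JB sumy sumyD x1pos hwx1 x1sum recx by auto
qed

lemma BV:
  assumes mu: "mu > 0" and Jne: "J \<noteq> []" and sJ: "sorted J" and Jb: "\<forall>v\<in>set J. 0 \<le> v \<and> v \<le> M"
    and p1: "\<forall>a\<in>set x1. a > 0" and h1: "highest_weight x1" and l1: "length x1 = 2*N1"
    and s1: "sum_list x1 \<le> M"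
  shows "alg_step (recon mu J x1) = (mu, length J, J, x1) \<and> (\<forall>a\<in>set (recon mu J x1). a > 0)
    \<and> highest_weight (recon mu J x1) \<and> length (recon mu J x1) = 2*(length J + N1)
    \<and> sum_list (recon mu J x1) \<le> M + 2 * real (length J + N1) * mu"
proof -
  define E where "E = insD (0,0) x1 J"
  obtain k D where ED: "E = (0, 0 + 2*k) # D" using insD_hd E_def by blast
  have Jnn: "\<forall>v\<in>set J. v \<ge> 0" using Jb by auto
  have M0: "M \<ge> 0" using Jne Jb by (cases J) auto
  have "\<forall>e\<in>set (tl E). fst e > 0" using insD_pos[OF p1 sJ Jnn, of 0 0] E_def by simp
  then have Dpos: "\<forall>e\<in>set D. fst e > 0" using ED by simp
  have Dnn: "\<forall>e\<in>set D. fst e \<ge> 0" using Dpos less_imp_le by blast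
  define y where "y = tl (undecomp E)"
  have yeq: "y = replicate (2*k) 0 @ undecomp D" using y_def ED by simp
  have JE0: "JE 0 E = J" using insD_JE[of 0 0 0 x1 J] E_def by simp
  have JE0': "JE 0 E = replicate k 0 @ JE 0 D"
  proof -
    have "(2*k + 1) div 2 = k" by presburger
    then show ?thesis using ED by simp
  qed
  have ynn: "\<forall>v\<in>set y. v \<ge> 0"
  proof -
    have "\<forall>v\<in>set (undecomp D). v \<ge> 0" using Dnn by (induction D rule: undecomp.induct) auto
    then show ?thesis using yeq by auto
  qed
  have y0: "0 \<in> set y"
  proof (cases "k = 0")
    case True
    then have "JE 0 D = J" using JE0 JE0' by simp
    then have "0 \<in> set (undecomp D)" using JE_nil_if Jne by metis
    then show ?thesis using yeq by simp
  next
    case False then show ?thesis using yeq by simp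
  qed
  have xeq: "recon mu J x1 = map (\<lambda>a. a + mu) y" unfolding recon_def y_def E_def ..
  have minx: "Min (set (recon mu J x1)) = mu"
    unfolding xeq by (rule Min_eqI) (use ynn y0 in auto)
  have ymap: "map (\<lambda>a. a - mu) (recon mu J x1) = y" unfolding xeq by (simp add: o_def)
  have dec: "decomp (0 # y) = E"
  proof -
    have "0 # y = undecomp E" using ED y_def by simp
    then show ?thesis using decomp_undecomp2[of D 0 "0 + 2*k"] Dpos ED by (metis less_irrefl)
  qed
  have grpE: "grp 0 E = 0 # x1" using insD_grp[of 0 0 0 x1 J] E_def by simp
  have x1eq: "grp 0 D = x1"
  proof (cases D)
    case Nil then show ?thesis using grpE ED by simp
  next
    case (Cons q r) then show ?thesis using grpE ED grp_cons[of D 0 0 "2*k"] by simp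
  qed
  have step: "alg_step (recon mu J x1) = (mu, length J, J, x1)"
    unfolding alg_step_eq Let_def minx ymap dec JE0 using ED x1eq by simp
  have lenE: "length (undecomp E) = 2 * length J + Suc (length x1)"
    using len_undecomp[of E 0 0] JE0 grpE by simp
  have leny: "length y = 2 * length J + length x1" using lenE y_def by simp
  have lenx: "length (recon mu J x1) = 2*(length J + N1)" using xeq leny l1 by simp
  have sumE: "sum_list (map fst E) \<le> 0 + M" using insD_sum[OF p1 sJ Jb s1 M0, of 0 0] E_def by simp
  have sumy: "sum_list y = sum_list (map fst E)"
  proof -
    have "sum_list (undecomp E) = sum_list (map fst E)" by (rule sum_undecomp)
    then show ?thesis using y_def ED by simp
  qed
  have sumx: "sum_list (recon mu J x1) \<le> M + 2 * real (length J + N1) * mu"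
    using xeq sum_map_add[of mu y] sumy sumE lenx leny l1 by simp
  have posx: "\<forall>a\<in>set (recon mu J x1). a > 0" using xeq ynn mu by auto
  have par: "even (length (undecomp D))"
  proof -
    have "length y = 2*k + length (undecomp D)" using yeq by simp
    then show ?thesis using leny l1 by presburger
  qed
  have hwD: "hwb 0 True (undecomp D)"
    using lemmaH'[of 0 0 D True] Dnn par h1 x1eq hw_hwb by simp
  have hwy: "hwb 0 True y" using hwD yeq hwb_zeros[of 0 True "2*k"] by simp
  have hwx: "highest_weight (recon mu J x1)"
    using hwy hw_hwb hw_map xeq by metis
  show ?thesis using step posx hwx lenx sumx by simp
qed

definition Rcond :: "real \<Rightarrow> nat \<Rightarrow> (nat \<Rightarrow> real) \<Rightarrow> (nat \<Rightarrow> nat) \<Rightarrow> (nat \<Rightarrow> real list) \<Rightarrow> bool" where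
  "Rcond L s mu nu J = (let NN = (\<lambda>i. \<Sum>j\<in>{i..<s}. nu j);
                    lam = (\<lambda>i. \<Sum>l\<le>i. mu l);
                    q = (\<lambda>i. L - 2 * (\<Sum>k<s. min (lam i) (lam k) * real (nu k)))
                in (\<forall>i<s. mu i > 0 \<and> nu i \<ge> 1)
                   \<and> (\<Sum>i<s. real (NN i) * mu i) \<le> L / 2
                   \<and> (\<forall>i<s. length (J i) = nu i \<and> sorted (J i)
                          \<and> (\<forall>j<nu i. 0 \<le> J i ! j \<and> J i ! j \<le> q i)))"

lemma Rset_Rcond: "D \<in> Rset L \<longleftrightarrow> D \<noteq> [] \<and> Rcond L (length D) (\<lambda>i. fst (D ! i)) (\<lambda>i. fst (snd (D ! i))) (\<lambda>i. snd (snd (D ! i)))"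
  unfolding Rset_def Rcond_def Let_def by (auto simp: Suc_le_eq)

lemma Rcond_0: "Rcond L 0 mu nu J \<longleftrightarrow> L \<ge> 0"
  unfolding Rcond_def Let_def by auto

lemma all_less_Suc': "(\<forall>i<Suc s. P i) \<longleftrightarrow> P 0 \<and> (\<forall>i<s. P (Suc i))"
  by (auto simp: less_Suc_eq_0_disj)

lemma Rcond_Suc:
  "Rcond L (Suc s) mu nu J \<longleftrightarrow>
    (mu 0 > 0 \<and> nu 0 \<ge> 1 \<and> length (J 0) = nu 0 \<and> sorted (J 0)
     \<and> (\<forall>v\<in>set (J 0). 0 \<le> v \<and> v \<le> L - 2 * real (\<Sum>j<Suc s. nu j) * mu 0)
     \<and> Rcond (L - 2 * real (\<Sum>j<Suc s. nu j) * mu 0) s (\<lambda>i. mu (Suc i)) (\<lambda>i. nu (Suc i)) (\<lambda>i. J (Suc i)))"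
  (is "?lhs \<longleftrightarrow> ?rhs")
proof -
  define Nt where "Nt = (\<Sum>j<Suc s. nu j)"
  define L' where "L' = L - 2 * real Nt * mu 0"
  define NN where "NN = (\<lambda>i. \<Sum>j\<in>{i..<Suc s}. nu j)"
  define lam where "lam = (\<lambda>i. \<Sum>l\<le>i. mu l)"
  define q where "q = (\<lambda>i. L - 2 * (\<Sum>k<Suc s. min (lam i) (lam k) * real (nu k)))"
  define NN' where "NN' = (\<lambda>i. \<Sum>j\<in>{i..<s}. nu (Suc j))"
  define lam' where "lam' = (\<lambda>i. \<Sum>l\<le>i. mu (Suc l))"
  define q' where "q' = (\<lambda>i. L' - 2 * (\<Sum>k<s. min (lam' i) (lam' k) * real (nu (Suc k))))"
  have L: "?lhs \<longleftrightarrow> (\<forall>i<Suc s. mu i > 0 \<and> nu i \<ge> 1)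
                   \<and> (\<Sum>i<Suc s. real (NN i) * mu i) \<le> L / 2
                   \<and> (\<forall>i<Suc s. length (J i) = nu i \<and> sorted (J i)
                          \<and> (\<forall>j<nu i. 0 \<le> J i ! j \<and> J i ! j \<le> q i))"
    unfolding Rcond_def Let_def NN_def lam_def q_def by simp
  have R': "Rcond L' s (\<lambda>i. mu (Suc i)) (\<lambda>i. nu (Suc i)) (\<lambda>i. J (Suc i)) \<longleftrightarrow>
                     (\<forall>i<s. mu (Suc i) > 0 \<and> nu (Suc i) \<ge> 1)
                   \<and> (\<Sum>i<s. real (NN' i) * mu (Suc i)) \<le> L' / 2
                   \<and> (\<forall>i<s. length (J (Suc i)) = nu (Suc i) \<and> sorted (J (Suc i))
                          \<and> (\<forall>j<nu (Suc i). 0 \<le> J (Suc i) ! j \<and> J (Suc i) ! j \<le> q' i))"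
    unfolding Rcond_def Let_def NN'_def lam'_def q'_def by simp
  have NNS: "\<And>i. NN (Suc i) = NN' i" unfolding NN_def NN'_def by (rule sum.shift_bounds_Suc_ivl)
  have NN0: "NN 0 = Nt" unfolding NN_def Nt_def by (simp add: atLeast0LessThan)
  have lamS: "\<And>i. lam (Suc i) = mu 0 + lam' i" unfolding lam_def lam'_def by (rule sum.atMost_Suc_shift)
  have lam0: "lam 0 = mu 0" unfolding lam_def by simp
  have sumeq: "(\<Sum>i<Suc s. real (NN i) * mu i) = real Nt * mu 0 + (\<Sum>i<s. real (NN' i) * mu (Suc i))"
    by (subst sum.lessThan_Suc_shift) (simp add: NNS NN0)
  have Nteq: "real Nt = (\<Sum>k<Suc s. real (nu k))" unfolding Nt_def by simp
  have Nteq2: "real Nt = real (nu 0) + (\<Sum>k<s. real (nu (Suc k)))"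
    unfolding Nt_def of_nat_sum by (subst sum.lessThan_Suc_shift) simp
  {
    assume P: "\<forall>i<Suc s. mu i > 0"
    have lam'nn: "\<And>i. i < s \<Longrightarrow> lam' i \<ge> 0"
      unfolding lam'_def using P by (intro sum_nonneg) (auto intro: less_imp_le)
    have q0: "q 0 = L'"
    proof -
      have "\<And>k. k < Suc s \<Longrightarrow> min (lam 0) (lam k) = mu 0"
      proof -
        fix k assume k: "k < Suc s"
        show "min (lam 0) (lam k) = mu 0"
        proof (cases k)
          case 0 then show ?thesis using lam0 by simp
        next
          case (Suc k') then show ?thesis using lam0 lamS lam'nn[of k'] k by simp
        qed
      qed
      then have "(\<Sum>k<Suc s. min (lam 0) (lam k) * real (nu k)) = (\<Sum>k<Suc s. mu 0 * real (nu k))"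
        by (intro sum.cong) auto
      also have "\<dots> = mu 0 * (\<Sum>k<Suc s. real (nu k))" by (rule sum_distrib_left[symmetric])
      also have "\<dots> = mu 0 * real Nt" using Nteq by simp
      finally show ?thesis unfolding q_def L'_def by simp
    qed
    have qS: "\<And>i. i < s \<Longrightarrow> q (Suc i) = q' i"
    proof -
      fix i assume i: "i < s"
      have "(\<Sum>k<Suc s. min (lam (Suc i)) (lam k) * real (nu k))
          = min (lam (Suc i)) (lam 0) * real (nu 0) + (\<Sum>k<s. min (lam (Suc i)) (lam (Suc k)) * real (nu (Suc k)))"
        by (subst sum.lessThan_Suc_shift) simp
      also have "min (lam (Suc i)) (lam 0) = mu 0" using lamS lam0 lam'nn[OF i] by simp
      also have "(\<Sum>k<s. min (lam (Suc i)) (lam (Suc k)) * real (nu (Suc k)))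
          = (\<Sum>k<s. mu 0 * real (nu (Suc k)) + min (lam' i) (lam' k) * real (nu (Suc k)))"
        by (intro sum.cong) (simp_all only: lamS min_add_distrib_right[symmetric] distrib_right)
      also have "\<dots> = mu 0 * (\<Sum>k<s. real (nu (Suc k))) + (\<Sum>k<s. min (lam' i) (lam' k) * real (nu (Suc k)))"
        by (simp add: sum.distrib sum_distrib_left)
      finally have "(\<Sum>k<Suc s. min (lam (Suc i)) (lam k) * real (nu k))
          = mu 0 * real Nt + (\<Sum>k<s. min (lam' i) (lam' k) * real (nu (Suc k)))"
        using Nteq2 by (simp add: algebra_simps)
      then show "q (Suc i) = q' i" unfolding q_def q'_def L'_def by (simp add: algebra_simps)
    qed
    have hA: "(\<forall>i<Suc s. mu i > 0 \<and> nu i \<ge> 1) \<longleftrightarrow> (mu 0 > 0 \<and> nu 0 \<ge> 1) \<and> (\<forall>i<s. mu (Suc i) > 0 \<and> nu (Suc i) \<ge> 1)"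
      by (rule all_less_Suc')
    have hB: "(\<Sum>i<Suc s. real (NN i) * mu i) \<le> L / 2 \<longleftrightarrow> (\<Sum>i<s. real (NN' i) * mu (Suc i)) \<le> L' / 2"
      unfolding sumeq L'_def by (auto simp: field_simps)
    have hC: "(\<forall>i<Suc s. length (J i) = nu i \<and> sorted (J i) \<and> (\<forall>j<nu i. 0 \<le> J i ! j \<and> J i ! j \<le> q i))
       \<longleftrightarrow> (length (J 0) = nu 0 \<and> sorted (J 0) \<and> (\<forall>v\<in>set (J 0). 0 \<le> v \<and> v \<le> L'))
         \<and> (\<forall>i<s. length (J (Suc i)) = nu (Suc i) \<and> sorted (J (Suc i)) \<and> (\<forall>j<nu (Suc i). 0 \<le> J (Suc i) ! j \<and> J (Suc i) ! j \<le> q' i))"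
      unfolding all_less_Suc' q0 using qS by (auto simp: all_set_conv_all_nth)
    have "?lhs \<longleftrightarrow> ?rhs"
      using R' unfolding L hA hB hC Nt_def[symmetric] L'_def[symmetric] by blast
  }
  moreover have "?lhs \<Longrightarrow> \<forall>i<Suc s. mu i > 0" using L by simp
  moreover have "?rhs \<Longrightarrow> \<forall>i<Suc s. mu i > 0"
    using R' L'_def Nt_def by (auto simp: all_less_Suc')
  ultimately show ?thesis by blast
qed

definition Rset0 :: "real \<Rightarrow> (real \<times> nat \<times> real list) list \<Rightarrow> bool" where
  "Rset0 L D = Rcond L (length D) (\<lambda>i. fst (D ! i)) (\<lambda>i. fst (snd (D ! i))) (\<lambda>i. snd (snd (D ! i)))"

definition sumnu :: "(real \<times> nat \<times> real list) list \<Rightarrow> nat" where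
  "sumnu D = sum_list (map (\<lambda>d. fst (snd d)) D)"

lemma Rset_Rset0: "D \<in> Rset L \<longleftrightarrow> D \<noteq> [] \<and> Rset0 L D"
  unfolding Rset0_def by (rule Rset_Rcond)

lemma Rset0_nil: "Rset0 L [] \<longleftrightarrow> L \<ge> 0"
  unfolding Rset0_def by (simp add: Rcond_0)

lemma sumnu_nth: "(\<Sum>j<length D. fst (snd (D ! j))) = sumnu D"
  unfolding sumnu_def by (simp add: sum_list_sum_nth atLeast0LessThan)

lemma sumnu_cons: "sumnu ((m,n,J) # D') = n + sumnu D'"
  unfolding sumnu_def by simp

lemma Rset0_cons: "Rset0 L ((m,n,J) # D') \<longleftrightarrow>
   m > 0 \<and> n \<ge> 1 \<and> length J = n \<and> sorted J
   \<and> (\<forall>v\<in>set J. 0 \<le> v \<and> v \<le> L - 2 * real (n + sumnu D') * m)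
   \<and> Rset0 (L - 2 * real (n + sumnu D') * m) D'"
proof -
  have s: "(\<Sum>j<Suc (length D'). fst (snd (((m,n,J) # D') ! j))) = n + sumnu D'"
    by (subst sum.lessThan_Suc_shift) (simp add: sumnu_nth)
  show ?thesis
    unfolding Rset0_def
    by (simp only: length_Cons Rcond_Suc s nth_Cons_0 nth_Cons_Suc fst_conv snd_conv)
qed

definition valid :: "real list \<Rightarrow> nat \<Rightarrow> bool" where
  "valid x N \<longleftrightarrow> (\<forall>a\<in>set x. a > 0) \<and> highest_weight x \<and> length x = 2*N \<and> N \<ge> 1"

lemma alg_unfold: "alg (Suc k) N x = (case alg_step x of (mu, nu, J, x') \<Rightarrow>
        (mu, nu, J) # (if N - nu = 0 then [] else alg k (N - nu) x'))"
  by simp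

lemma FVv: "valid x N \<Longrightarrow> alg_step x = (mu, nu, J, x1) \<Longrightarrow>
   mu > 0 \<and> nu = length J \<and> 1 \<le> nu \<and> nu \<le> N \<and> sorted J
    \<and> (\<forall>v\<in>set J. 0 \<le> v \<and> v \<le> sum_list x - 2 * real N * mu)
    \<and> (N - nu \<noteq> 0 \<longrightarrow> valid x1 (N - nu)) \<and> length x1 = 2*(N - nu)
    \<and> sum_list x1 \<le> sum_list x - 2 * real N * mu \<and> x = recon mu J x1"
proof -
  assume v: "valid x N" and st: "alg_step x = (mu, nu, J, x1)"
  have "N \<ge> 1" "\<forall>a\<in>set x. a > 0" "highest_weight x" "length x = 2*N" using v valid_def by auto
  note F = FV[OF this(2,3,4,1) st]
  have "N - nu \<noteq> 0 \<longrightarrow> valid x1 (N - nu)" using F unfolding valid_def by auto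
  then show ?thesis using F by blast
qed

lemma fuel: "valid x N \<Longrightarrow> k \<ge> N \<Longrightarrow> alg k N x = alg N N x"
proof (induction N arbitrary: x k rule: less_induct)
  case (less N)
  obtain mu nu J x1 where st: "alg_step x = (mu, nu, J, x1)" by (cases "alg_step x") auto
  have F: "1 \<le> nu" "N - nu \<noteq> 0 \<longrightarrow> valid x1 (N - nu)" using FVv[OF less.prems(1) st] by auto
  have N1: "N \<ge> 1" using less.prems(1) valid_def by auto
  obtain k0 where k0: "k = Suc k0" using less.prems(2) N1 by (cases k) auto
  obtain N0 where N0: "N = Suc N0" using N1 by (cases N) auto
  show ?case
  proof (cases "N - nu = 0")
    case True
    then show ?thesis unfolding k0 using N0 st by simp
  next
    case False
    have v1: "valid x1 (N - nu)" using F False by blast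
    have lt: "N - nu < N" using F(1) N1 by simp
    have "k0 \<ge> N - nu" using less.prems(2) k0 F(1) by simp
    then have "alg k0 (N - nu) x1 = alg (N - nu) (N - nu) x1" using less.IH[OF lt v1] by blast
    moreover have "N0 \<ge> N - nu" using N0 F(1) by simp
    then have "alg N0 (N - nu) x1 = alg (N - nu) (N - nu) x1" using less.IH[OF lt v1] by blast
    ultimately show ?thesis unfolding k0 using N0 st False by simp
  qed
qed

lemma fwd: "valid x N \<Longrightarrow> sum_list x \<le> L \<Longrightarrow> Rset0 L (alg N N x) \<and> alg N N x \<noteq> [] \<and> sumnu (alg N N x) = N"
proof (induction N arbitrary: x L rule: less_induct)
  case (less N)
  obtain mu nu J x1 where st: "alg_step x = (mu, nu, J, x1)" by (cases "alg_step x") auto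
  have F: "mu > 0" "nu = length J" "1 \<le> nu" "nu \<le> N" "sorted J"
    "\<forall>v\<in>set J. 0 \<le> v \<and> v \<le> sum_list x - 2 * real N * mu"
    "N - nu \<noteq> 0 \<longrightarrow> valid x1 (N - nu)" "length x1 = 2*(N - nu)"
    "sum_list x1 \<le> sum_list x - 2 * real N * mu" "x = recon mu J x1"
    using FVv[OF less.prems(1) st] by auto
  have N1: "N \<ge> 1" using less.prems(1) valid_def by auto
  obtain N0 where N0: "N = Suc N0" using N1 by (cases N) auto
  define T where "T = (if N - nu = 0 then [] else alg N0 (N - nu) x1)"
  have algx: "alg N N x = (mu, nu, J) # T" unfolding T_def using N0 st by simp
  have Tprop: "Rset0 (L - 2 * real N * mu) T \<and> sumnu T = N - nu"
  proof (cases "N - nu = 0")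
    case True
    have "J \<noteq> []" using F by auto
    then obtain v where "v \<in> set J" by (cases J) auto
    then have "0 \<le> sum_list x - 2 * real N * mu" using F by force
    then have "L - 2 * real N * mu \<ge> 0" using less.prems(2) by simp
    then show ?thesis using True T_def Rset0_nil sumnu_def by simp
  next
    case False
    have v1: "valid x1 (N - nu)" using F False by blast
    have lt: "N - nu < N" using F(3) N1 by simp
    have ge: "N0 \<ge> N - nu" using N0 F(3) by simp
    have TT: "T = alg (N - nu) (N - nu) x1" unfolding T_def using False fuel[OF v1 ge] by simp
    have "sum_list x1 \<le> L - 2 * real N * mu" using F less.prems(2) by simp
    then show ?thesis using less.IH[OF lt v1] TT by simp
  qed
  have sn: "nu + sumnu T = N" using Tprop F by simp
  have "Rset0 L ((mu, nu, J) # T)"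
    unfolding Rset0_cons sn using F Tprop less.prems(2) by force
  then show ?case using algx sn sumnu_cons by simp
qed

lemma inj: "valid x N \<Longrightarrow> valid x' N' \<Longrightarrow> alg N N x = alg N' N' x' \<Longrightarrow> x = x'"
proof (induction N arbitrary: x x' N' rule: less_induct)
  case (less N)
  have eqN: "N = N'" using fwd[OF less.prems(1) order_refl] fwd[OF less.prems(2) order_refl] less.prems(3) by metis
  obtain mu nu J x1 where st: "alg_step x = (mu, nu, J, x1)" by (cases "alg_step x") auto
  obtain mu' nu' J' x1' where st': "alg_step x' = (mu', nu', J', x1')" by (cases "alg_step x'") auto
  have F: "mu > 0" "nu = length J" "1 \<le> nu" "nu \<le> N" "sorted J"
    "\<forall>v\<in>set J. 0 \<le> v \<and> v \<le> sum_list x - 2 * real N * mu"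
    "N - nu \<noteq> 0 \<longrightarrow> valid x1 (N - nu)" "length x1 = 2*(N - nu)"
    "sum_list x1 \<le> sum_list x - 2 * real N * mu" "x = recon mu J x1"
    using FVv[OF less.prems(1) st] by auto
  have F': "mu' > 0" "nu' = length J'" "1 \<le> nu'" "nu' \<le> N" "sorted J'"
    "\<forall>v\<in>set J'. 0 \<le> v \<and> v \<le> sum_list x' - 2 * real N * mu'"
    "N - nu' \<noteq> 0 \<longrightarrow> valid x1' (N - nu')" "length x1' = 2*(N - nu')"
    "sum_list x1' \<le> sum_list x' - 2 * real N * mu'" "x' = recon mu' J' x1'"
    using FVv[OF less.prems(2)[folded eqN] st'] by auto
  have N1: "N \<ge> 1" using less.prems(1) valid_def by auto
  obtain N0 where N0: "N = Suc N0" using N1 by (cases N) auto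
  have e: "(mu, nu, J) # (if N - nu = 0 then [] else alg N0 (N - nu) x1)
         = (mu', nu', J') # (if N - nu' = 0 then [] else alg N0 (N - nu') x1')"
  proof -
    have a1: "alg N N x = (mu, nu, J) # (if N - nu = 0 then [] else alg N0 (N - nu) x1)" using N0 st by simp
    have a2: "alg N N x' = (mu', nu', J') # (if N - nu' = 0 then [] else alg N0 (N - nu') x1')" using N0 st' by simp
    show ?thesis using a1 a2 less.prems(3) eqN by metis
  qed
  then have h: "mu = mu'" "nu = nu'" "J = J'" by auto
  show ?case
  proof (cases "N - nu = 0")
    case True
    then have "x1 = []" "x1' = []" using F F' h by auto
    then show ?thesis using F F' h by simp
  next
    case False
    have v1: "valid x1 (N - nu)" and v1': "valid x1' (N - nu)" using F(7) F'(7) h False by auto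
    have lt: "N - nu < N" using F(3) N1 by simp
    have "alg N0 (N - nu) x1 = alg N0 (N - nu) x1'" using e h False by simp
    moreover have "N0 \<ge> N - nu" using N0 F(3) by simp
    ultimately have "alg (N - nu) (N - nu) x1 = alg (N - nu) (N - nu) x1'"
      using fuel[OF v1] fuel[OF v1'] by metis
    then have "x1 = x1'" using less.IH[OF lt v1 v1'] by simp
    then show ?thesis using F F' h by simp
  qed
qed

lemma surj: "Rset0 L D \<Longrightarrow> D \<noteq> [] \<Longrightarrow> \<exists>x N. valid x N \<and> sum_list x \<le> L \<and> alg N N x = D"
proof (induction D arbitrary: L)
  case Nil then show ?case by simp
next
  case (Cons d D')
  obtain m n J where d: "d = (m, n, J)" by (cases d) auto
  define L' where "L' = L - 2 * real (n + sumnu D') * m"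
  have R: "m > 0" "n \<ge> 1" "length J = n" "sorted J" "\<forall>v\<in>set J. 0 \<le> v \<and> v \<le> L'" "Rset0 L' D'"
    using Cons.prems(1) unfolding d Rset0_cons L'_def by auto
  have Jne: "J \<noteq> []" using R by auto
  obtain x1 N1 where x1: "x1 = [] \<and> N1 = 0 \<and> D' = [] \<or> (valid x1 N1 \<and> sum_list x1 \<le> L' \<and> alg N1 N1 x1 = D')"
    using Cons.IH[OF R(6)] by blast
  have x1props: "\<forall>a\<in>set x1. a > 0" "highest_weight x1" "length x1 = 2*N1" "sum_list x1 \<le> L'"
  proof -
    show "\<forall>a\<in>set x1. a > 0" "highest_weight x1" "length x1 = 2*N1"
      using x1 unfolding valid_def highest_weight_def by auto
    show "sum_list x1 \<le> L'"
    proof (cases "D' = []")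
      case True
      then have "L' \<ge> 0" using R(6) Rset0_nil by simp
      then show ?thesis using x1 True valid_def fwd by auto
    next
      case False then show ?thesis using x1 by auto
    qed
  qed
  have sn: "sumnu D' = N1"
    using x1 fwd[of x1 N1 L'] sumnu_def by auto
  define x where "x = recon m J x1"
  note B = BV[OF R(1) Jne R(4) R(5) x1props(1,2,3,4)]
  have vx: "valid x (n + N1)" using B R unfolding x_def valid_def by simp
  have sx: "sum_list x \<le> L" using B R unfolding x_def L'_def sn by simp
  have ax: "alg (n + N1) (n + N1) x = d # D'"
  proof (cases "N1 = 0")
    case True
    then have "D' = []" using x1 valid_def by auto
    then show ?thesis using B R True d unfolding x_def by (cases n) auto
  next
    case False
    then have v1: "valid x1 N1" and a1: "alg N1 N1 x1 = D'" using x1 by auto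
    obtain n0 where n0: "n = Suc n0" using R(2) by (cases n) auto
    have "alg (n0 + N1) N1 x1 = D'" using fuel[OF v1, of "n0 + N1"] a1 by simp
    then show ?thesis using B R False d n0 unfolding x_def by simp
  qed
  show ?case using vx sx ax by blast
qed

theorem mainTheorem11:
  fixes L :: real
  assumes "L > 0"
  shows "(\<forall>x\<in>Pplus L. phi x \<in> Rset L) \<and> bij_betw phi (Pplus L) (Rset L)"
proof -
  have P: "\<And>x. x \<in> Pplus L \<longleftrightarrow> valid x (length x div 2) \<and> sum_list x \<le> L"
    unfolding Pplus_def valid_def by auto
  have phi: "\<And>x. phi x = alg (length x div 2) (length x div 2) x" unfolding phi_def ..
  have A: "\<forall>x\<in>Pplus L. phi x \<in> Rset L"
  proof
    fix x assume "x \<in> Pplus L"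
    then have "valid x (length x div 2)" "sum_list x \<le> L" using P by auto
    then show "phi x \<in> Rset L" using fwd unfolding phi Rset_Rset0 by blast
  qed
  have I: "inj_on phi (Pplus L)"
  proof (rule inj_onI)
    fix x y assume "x \<in> Pplus L" "y \<in> Pplus L" "phi x = phi y"
    then have "valid x (length x div 2)" "valid y (length y div 2)"
      "alg (length x div 2) (length x div 2) x = alg (length y div 2) (length y div 2) y"
      using P phi by auto
    then show "x = y" by (rule inj)
  qed
  have S: "Rset L \<subseteq> phi ` Pplus L"
  proof
    fix D assume "D \<in> Rset L"
    then obtain x N where x: "valid x N" "sum_list x \<le> L" "alg N N x = D"
      using surj Rset_Rset0 by blast
    have "length x div 2 = N" using x(1) valid_def by simp
    then have "x \<in> Pplus L" "phi x = D" using x P phi by auto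
    then show "D \<in> phi ` Pplus L" by blast
  qed
  show ?thesis using A I S unfolding bij_betw_def by blast
qed

end
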